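(* Let $(G,\precsim)$ be a compatible quasi-ordered abelian group. For every $g\in G$: $g$ is v-type $\Leftrightarrow$ $g\sim-g$ $\Leftrightarrow$ ($0\precsim g$ and $0\precsim -g$). Equivalently: $g$ is o-type $\Leftrightarrow$ ($g\not\sim-g$ or $g=0$) $\Leftrightarrow$ ($g\precsim0$ or $-g\precsim0$).
   Context: A compatible quasi-ordered abelian group is an abelian group $G$ with a total quasi-order $\precsim$ (reflexive, transitive, any two elements comparable) such that, writing $a\sim b$ for $a\precsim b\wedge b\precsim a$: $(Q_1)$ $x\sim0\Rightarrow x=0$; $(Q_2)$ $x\precsim y\wedge y\not\sim z\Rightarrow x+z\precsim y+z$, for all $x,y,z$. Let $cl(g)$ be the $\sim$-class of $g$. An element $g$ is o-type if $cl(g)=\{g\}$ and $g$ is not of order $2$; $g$ is v-type if $\{g\}\subsetneq cl(g)$ or $2g=0$ (so $0$ is both o-type and v-type). *)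

theory Defs
  imports Main
begin

definition qsim :: "('a \<Rightarrow> 'a \<Rightarrow> bool) \<Rightarrow> 'a \<Rightarrow> 'a \<Rightarrow> bool" where
  "qsim qle x y \<longleftrightarrow> qle x y \<and> qle y x"

definition compatible_qoag :: "('a::ab_group_add \<Rightarrow> 'a \<Rightarrow> bool) \<Rightarrow> bool" where
  "compatible_qoag qle \<longleftrightarrow>
     (\<forall>x. qle x x) \<and>
     (\<forall>x y z. qle x y \<and> qle y z \<longrightarrow> qle x z) \<and>
     (\<forall>x y. qle x y \<or> qle y x) \<and>
     (\<forall>x. qsim qle x 0 \<longrightarrow> x = 0) \<and>
     (\<forall>x y z. qle x y \<and> \<not> qsim qle y z \<longrightarrow> qle (x + z) (y + z))"

definition qcl :: "('a \<Rightarrow> 'a \<Rightarrow> bool) \<Rightarrow> 'a \<Rightarrow> 'a set" where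
  "qcl qle g = {h. qsim qle h g}"

definition order_two :: "'a::ab_group_add \<Rightarrow> bool" where
  "order_two g \<longleftrightarrow> g + g = 0 \<and> g \<noteq> 0"

definition o_type :: "('a::ab_group_add \<Rightarrow> 'a \<Rightarrow> bool) \<Rightarrow> 'a \<Rightarrow> bool" where
  "o_type qle g \<longleftrightarrow> qcl qle g = {g} \<and> \<not> order_two g"

definition v_type :: "('a::ab_group_add \<Rightarrow> 'a \<Rightarrow> bool) \<Rightarrow> 'a \<Rightarrow> bool" where
  "v_type qle g \<longleftrightarrow> {g} \<subset> qcl qle g \<or> g + g = 0"

end

theory Submission
  imports Defs
begin

theorem mainTheorem4:
  fixes qle :: "'a::ab_group_add \<Rightarrow> 'a \<Rightarrow> bool"
  assumes "compatible_qoag qle"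
  shows "\<forall>g. (v_type qle g \<longleftrightarrow> qsim qle g (- g))
           \<and> (qsim qle g (- g) \<longleftrightarrow> qle 0 g \<and> qle 0 (- g))
           \<and> (o_type qle g \<longleftrightarrow> (\<not> qsim qle g (- g) \<or> g = 0))
           \<and> ((\<not> qsim qle g (- g) \<or> g = 0) \<longleftrightarrow> qle g 0 \<or> qle (- g) 0)"
proof
  fix g
  have refl: "\<And>x. qle x x" and tr: "\<And>x y z. qle x y \<Longrightarrow> qle y z \<Longrightarrow> qle x z"
    and tot: "\<And>x y. qle x y \<or> qle y x"
    and q1: "\<And>x. qsim qle x 0 \<Longrightarrow> x = 0"
    and q2: "\<And>x y z. qle x y \<Longrightarrow> \<not> qsim qle y z \<Longrightarrow> qle (x + z) (y + z)"
    using assms unfolding compatible_qoag_def by blast+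
  have P2: "qsim qle g (- g) \<longleftrightarrow> qle 0 g \<and> qle 0 (- g)" for g
  proof
    assume s: "qsim qle g (- g)"
    show "qle 0 g \<and> qle 0 (- g)"
    proof (cases "g = 0")
      case True thus ?thesis using refl by simp
    next
      case False
      hence n1: "\<not> qsim qle 0 (- g)" using q1[of "- g"] by (auto simp: qsim_def)
      have "qle 0 g"
      proof (rule ccontr)
        assume "\<not> qle 0 g"
        hence "qle g 0" using tot by blast
        from q2[OF this n1] have "qle 0 (- g)" by simp
        hence "qle 0 g" using s tr unfolding qsim_def by blast
        thus False using \<open>\<not> qle 0 g\<close> by simp
      qed
      thus ?thesis using s tr unfolding qsim_def by blast
    qed
  next
    assume a: "qle 0 g \<and> qle 0 (- g)"
    show "qsim qle g (- g)"
    proof (rule ccontr)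
      assume n: "\<not> qsim qle g (- g)"
      from q2[OF conjunct1[OF a] n] have "qle (- g) 0" by simp
      hence "- g = 0" using q1 a unfolding qsim_def by blast
      hence "g = 0" by simp
      thus False using n refl unfolding qsim_def by simp
    qed
  qed
  have sing: "qcl qle g = {g}" if n: "\<not> qsim qle g (- g)"
  proof -
    have "h = g" if h: "qsim qle h g" for h
    proof -
      from q2[of h g "- g"] h n have a: "qle (h - g) 0" by (simp add: qsim_def)
      have "\<not> qsim qle h (- g)" using n h tr unfolding qsim_def by blast
      from q2[of g h "- g"] h this have b: "qle 0 (h - g)" by (simp add: qsim_def)
      from a b q1 have "h - g = 0" unfolding qsim_def by blast
      thus ?thesis by simp
    qed
    moreover have "qsim qle g g" using refl unfolding qsim_def by simp
    ultimately show ?thesis unfolding qcl_def by blast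
  qed
  have gin: "g \<in> qcl qle g" using refl unfolding qcl_def qsim_def by simp
  have P1: "v_type qle g \<longleftrightarrow> qsim qle g (- g)"
  proof
    assume v: "v_type qle g"
    show "qsim qle g (- g)"
    proof (cases "g + g = 0")
      case True
      hence "- g = g" by (simp add: add_eq_0_iff)
      thus ?thesis using refl unfolding qsim_def by simp
    next
      case False
      hence "{g} \<subset> qcl qle g" using v unfolding v_type_def by simp
      thus ?thesis using sing by blast
    qed
  next
    assume s: "qsim qle g (- g)"
    show "v_type qle g"
    proof (cases "- g = g")
      case True
      hence "g + g = 0" by (metis add.right_inverse)
      thus ?thesis unfolding v_type_def by simp
    next
      case False
      have "- g \<in> qcl qle g" using s unfolding qcl_def qsim_def by simp
      thus ?thesis using False gin unfolding v_type_def by blast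
    qed
  qed
  have z: "qcl qle 0 = {0}" using q1 refl unfolding qcl_def qsim_def by auto
  have P3: "o_type qle g \<longleftrightarrow> (\<not> qsim qle g (- g) \<or> g = 0)"
  proof -
    have "o_type qle g \<longleftrightarrow> (\<not> v_type qle g \<or> g = 0)"
      using gin z unfolding o_type_def v_type_def order_two_def by auto
    thus ?thesis using P1 by simp
  qed
  have P4: "(\<not> qsim qle g (- g) \<or> g = 0) \<longleftrightarrow> qle g 0 \<or> qle (- g) 0"
  proof
    assume "\<not> qsim qle g (- g) \<or> g = 0"
    thus "qle g 0 \<or> qle (- g) 0" using P2[of g] tot refl by blast
  next
    assume a: "qle g 0 \<or> qle (- g) 0"
    show "\<not> qsim qle g (- g) \<or> g = 0"
    proof (rule ccontr)
      assume "\<not> (\<not> qsim qle g (- g) \<or> g = 0)"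
      hence s: "qsim qle g (- g)" and g: "g \<noteq> 0" by auto
      from P2[of g] s have "qle 0 g" "qle 0 (- g)" by auto
      with a have "qsim qle g 0 \<or> qsim qle (- g) 0" unfolding qsim_def by blast
      thus False using q1 g by fastforce
    qed
  qed
  show "(v_type qle g \<longleftrightarrow> qsim qle g (- g))
           \<and> (qsim qle g (- g) \<longleftrightarrow> qle 0 g \<and> qle 0 (- g))
           \<and> (o_type qle g \<longleftrightarrow> (\<not> qsim qle g (- g) \<or> g = 0))
           \<and> ((\<not> qsim qle g (- g) \<or> g = 0) \<longleftrightarrow> qle g 0 \<or> qle (- g) 0)"
    using P1 P2 P3 P4 by blast
qed

end
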